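(* Consider a batch contextual bandit with finite context space $\mathcal{S}$, finite action space $\mathcal{A}$, context distribution $d_0$, reward distributions $R(s,a)\in\Delta([0,R_{\max}])$, behavior policy $\pi_b$, $\mu:=d_0\times\pi_b$, and a finite class $\mathcal{F}$ of functions $\mathcal{S}\times\mathcal{A}\to[0,R_{\max}]$. Let $\hat f\in\mathcal{F}$ satisfy $\mathcal{L}_\mu(\hat f)-\min_{f\in\mathcal{F}}\mathcal{L}_\mu(f)\le\epsilon$. Assume: (a) there is $C<+\infty$ such that for all $f,f'\in\mathcal{F}$ and every admissible $\nu$, $\|f-f'\|_\nu^2\le C\,\|f-f'\|_\mu^2$; (b) there exists a valid reward function $f^\star\in\mathcal{F}$, i.e. $f^\star$ satisfies $\mathbb{E}_{(s,a)\sim\nu}[f^\star(s,a)]=\mathbb{E}_{(s,a)\sim\nu,\,r\sim R(s,a)}[r]$ for every admissible $\nu$, and $\mathcal{L}_\mu(f')-\mathcal{L}_\mu(f^\star)=\|f'-f^\star\|_\mu^2$ for every $f'\in\mathcal{F}$. Then for any valid reward function $f^\star$ (in the sense of (b)), $$v^{\pi_{\hat f}}\ \ge\ v^{\pi_{f^\star}}-2\sqrt{C\epsilon}.$$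
   Context: Data: $s\sim d_0$, $a\sim\pi_b(\cdot\mid s)$, $r\sim R(s,a)$; $\mu$ is the joint law of $(s,a)$. $\mathcal{L}_\mu(f):=\mathbb{E}_{(s,a)\sim\mu,\,r\sim R(s,a)}[(f(s,a)-r)^2]$. $\|g\|_\nu^2:=\mathbb{E}_{(s,a)\sim\nu}[g(s,a)^2]$. $\pi_f$ is the greedy policy $s\mapsto\arg\max_af(s,a)$ (fixed tie-breaking). The admissible distributions are the distributions $d_0\times\pi_f$ (i.e. $s\sim d_0$, $a=\pi_f(s)$) for $f\in\mathcal{F}$. $v^\pi:=\mathbb{E}_{s\sim d_0,\,r\sim R(s,\pi(s))}[r]$. *)

theory Defs
  imports "HOL-Probability.Probability"
begin

definition mu_dist :: "'s pmf \<Rightarrow> ('s \<Rightarrow> 'a pmf) \<Rightarrow> ('s \<times> 'a) pmf" where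
  "mu_dist d0 pib = bind_pmf d0 (\<lambda>s. map_pmf (\<lambda>a. (s, a)) (pib s))"

definition policy_dist :: "'s pmf \<Rightarrow> ('s \<Rightarrow> 'a) \<Rightarrow> ('s \<times> 'a) pmf" where
  "policy_dist d0 \<pi> = map_pmf (\<lambda>s. (s, \<pi> s)) d0"

definition admissible ::
  "'s pmf \<Rightarrow> (('s \<Rightarrow> 'a \<Rightarrow> real) \<Rightarrow> 's \<Rightarrow> 'a) \<Rightarrow> ('s \<Rightarrow> 'a \<Rightarrow> real) set \<Rightarrow> ('s \<times> 'a) pmf set" where
  "admissible d0 greedy F = (\<lambda>f. policy_dist d0 (greedy f)) ` F"

definition sq_loss :: "('s \<times> 'a) pmf \<Rightarrow> ('s \<Rightarrow> 'a \<Rightarrow> real pmf) \<Rightarrow> ('s \<Rightarrow> 'a \<Rightarrow> real) \<Rightarrow> real" where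
  "sq_loss nu R f = measure_pmf.expectation nu
      (\<lambda>(s, a). measure_pmf.expectation (R s a) (\<lambda>r. (f s a - r)\<^sup>2))"

definition sq_norm :: "('s \<times> 'a) pmf \<Rightarrow> ('s \<Rightarrow> 'a \<Rightarrow> real) \<Rightarrow> real" where
  "sq_norm nu g = measure_pmf.expectation nu (\<lambda>(s, a). (g s a)\<^sup>2)"

definition policy_value :: "'s pmf \<Rightarrow> ('s \<Rightarrow> 'a \<Rightarrow> real pmf) \<Rightarrow> ('s \<Rightarrow> 'a) \<Rightarrow> real" where
  "policy_value d0 R \<pi> = measure_pmf.expectation d0 (\<lambda>s. measure_pmf.expectation (R s (\<pi> s)) (\<lambda>r. r))"

definition valid_reward ::
  "'s pmf \<Rightarrow> ('s \<Rightarrow> 'a pmf) \<Rightarrow> ('s \<Rightarrow> 'a \<Rightarrow> real pmf) \<Rightarrow> (('s \<Rightarrow> 'a \<Rightarrow> real) \<Rightarrow> 's \<Rightarrow> 'a)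
    \<Rightarrow> ('s \<Rightarrow> 'a \<Rightarrow> real) set \<Rightarrow> ('s \<Rightarrow> 'a \<Rightarrow> real) \<Rightarrow> bool" where
  "valid_reward d0 pib R greedy F fs \<longleftrightarrow>
     (\<forall>nu \<in> admissible d0 greedy F.
        measure_pmf.expectation nu (\<lambda>(s, a). fs s a)
        = measure_pmf.expectation nu (\<lambda>(s, a). measure_pmf.expectation (R s a) (\<lambda>r. r)))
   \<and> (\<forall>f' \<in> F. sq_loss (mu_dist d0 pib) R f' - sq_loss (mu_dist d0 pib) R fs
                = sq_norm (mu_dist d0 pib) (\<lambda>s a. f' s a - fs s a))"

end

theory Submission
  imports Defs
begin

lemma pmf_int_fin: "integrable (measure_pmf (M :: 'x::finite pmf)) (f :: 'x \<Rightarrow> real)"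
  by (rule integrable_measure_pmf_finite) simp

lemma jensen_sq:
  fixes M :: "'x::finite pmf" and g :: "'x \<Rightarrow> real"
  shows "\<bar>measure_pmf.expectation M g\<bar> \<le> sqrt (measure_pmf.expectation M (\<lambda>x. (g x)\<^sup>2))"
proof -
  have "measure_pmf.variance M g = measure_pmf.expectation M (\<lambda>x. (g x)\<^sup>2) - (measure_pmf.expectation M g)\<^sup>2"
    by (rule measure_pmf.variance_eq) (auto intro: pmf_int_fin)
  moreover have "0 \<le> measure_pmf.variance M g" by (rule measure_pmf.variance_positive)
  ultimately have "(measure_pmf.expectation M g)\<^sup>2 \<le> measure_pmf.expectation M (\<lambda>x. (g x)\<^sup>2)" by simp
  then show ?thesis using real_le_rsqrt real_sqrt_abs by (metis real_sqrt_le_mono)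
qed

lemma pol_exp:
  fixes h :: "'s \<Rightarrow> 'a \<Rightarrow> real"
  shows "measure_pmf.expectation (policy_dist d0 \<pi>) (\<lambda>(s, a). h s a) = measure_pmf.expectation d0 (\<lambda>s. h s (\<pi> s))"
  by (simp add: policy_dist_def)

lemma pol_sq:
  fixes h :: "'s \<Rightarrow> 'a \<Rightarrow> real"
  shows "sq_norm (policy_dist d0 \<pi>) h = measure_pmf.expectation d0 (\<lambda>s. (h s (\<pi> s))\<^sup>2)"
  by (simp add: policy_dist_def sq_norm_def)

theorem theorem3:
  fixes d0 :: "'s::finite pmf"
    and pib :: "'s \<Rightarrow> 'a::finite pmf"
    and R :: "'s \<Rightarrow> 'a \<Rightarrow> real pmf"
    and Rmax :: real
    and F :: "('s \<Rightarrow> 'a \<Rightarrow> real) set"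
    and greedy :: "('s \<Rightarrow> 'a \<Rightarrow> real) \<Rightarrow> 's \<Rightarrow> 'a"
    and fhat fstar :: "'s \<Rightarrow> 'a \<Rightarrow> real"
    and eps C :: real
  assumes R_range: "\<And>s a. set_pmf (R s a) \<subseteq> {0..Rmax}"
    and F_finite: "finite F"
    and F_range: "\<And>f s a. f \<in> F \<Longrightarrow> f s a \<in> {0..Rmax}"
    and greedy_max: "\<And>f s a. f s a \<le> f s (greedy f s)"
    and fhat_in: "fhat \<in> F"
    and fhat_erm: "sq_loss (mu_dist d0 pib) R fhat - Min (sq_loss (mu_dist d0 pib) R ` F) \<le> eps"
    and C_nonneg: "0 \<le> C"
    and concentrability: "\<And>f f' nu. f \<in> F \<Longrightarrow> f' \<in> F \<Longrightarrow> nu \<in> admissible d0 greedy F \<Longrightarrow>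
         sq_norm nu (\<lambda>s a. f s a - f' s a) \<le> C * sq_norm (mu_dist d0 pib) (\<lambda>s a. f s a - f' s a)"
    and realizable: "\<exists>g \<in> F. valid_reward d0 pib R greedy F g"
    and fstar_in: "fstar \<in> F"
    and fstar_valid: "valid_reward d0 pib R greedy F fstar"
  shows "policy_value d0 R (greedy fhat) \<ge> policy_value d0 R (greedy fstar) - 2 * sqrt (C * eps)"
proof -
  let ?mu = "mu_dist d0 pib"
  let ?L = "sq_loss ?mu R"
  define A where "A h \<pi> = measure_pmf.expectation d0 (\<lambda>s. h s (\<pi> s))" for h :: "'s \<Rightarrow> 'a \<Rightarrow> real" and \<pi>
  have "Min (?L ` F) \<le> ?L fstar" using F_finite fstar_in by simp
  hence nmu: "sq_norm ?mu (\<lambda>s a. fhat s a - fstar s a) \<le> eps"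
    using fstar_valid fhat_in fhat_erm unfolding valid_reward_def by force
  have bound: "\<bar>A (\<lambda>s a. fhat s a - fstar s a) (greedy f)\<bar> \<le> sqrt (C * eps)" if "f \<in> F" for f
  proof -
    have adm: "policy_dist d0 (greedy f) \<in> admissible d0 greedy F"
      using that unfolding admissible_def by blast
    have "\<bar>A (\<lambda>s a. fhat s a - fstar s a) (greedy f)\<bar>
        \<le> sqrt (sq_norm (policy_dist d0 (greedy f)) (\<lambda>s a. fhat s a - fstar s a))"
      unfolding A_def pol_sq by (rule jensen_sq)
    also have "\<dots> \<le> sqrt (C * eps)"
      using concentrability[OF fhat_in fstar_in adm] nmu C_nonneg
      by (meson order_trans mult_left_mono real_sqrt_le_mono)
    finally show ?thesis .
  qed
  have val: "policy_value d0 R (greedy f) = A fstar (greedy f)" if "f \<in> F" for f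
  proof -
    have adm: "policy_dist d0 (greedy f) \<in> admissible d0 greedy F"
      using that unfolding admissible_def by blast
    have "policy_value d0 R (greedy f) = measure_pmf.expectation (policy_dist d0 (greedy f))
          (\<lambda>(s, a). measure_pmf.expectation (R s a) (\<lambda>r. r))"
      by (simp add: pol_exp policy_value_def)
    also have "\<dots> = measure_pmf.expectation (policy_dist d0 (greedy f)) (\<lambda>(s, a). fstar s a)"
      using fstar_valid adm unfolding valid_reward_def by simp
    also have "\<dots> = A fstar (greedy f)" by (simp add: pol_exp A_def)
    finally show ?thesis .
  qed
  have diff: "A (\<lambda>s a. g s a - h s a) \<pi> = A g \<pi> - A h \<pi>" for g h \<pi>
    unfolding A_def by (rule Bochner_Integration.integral_diff) (auto intro: pmf_int_fin)
  have mono: "A fhat (greedy fstar) \<le> A fhat (greedy fhat)"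
    unfolding A_def by (rule integral_mono) (auto intro: pmf_int_fin greedy_max)
  show ?thesis
    using val[OF fhat_in] val[OF fstar_in] bound[OF fhat_in] bound[OF fstar_in] mono
      diff[of fhat fstar "greedy fhat"] diff[of fhat fstar "greedy fstar"]
    by linarith
qed

end
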